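(* Given a critical tuple $(\mathrm{Block},\mathrm{Gd},\mathrm{Bd})$ as input, the Gap algorithm returns an independent set $P\subseteq\mathcal{U}\setminus F$ such that $$\mathrm{OPT}(P)\ \ge\ \sum_{j\in\mathcal{B}}2^j\Big(\mathrm{uncov}\big(B_F(\mathrm{Bd}(j))\cup B_{\mathcal{U}\setminus F}(\mathrm{Block}(j)\setminus\{j\}),\,B_{\mathcal{U}\setminus F}(j)\big)-\mathrm{indep}\big(B_F(\mathrm{Gd}(j)),\,B_{\mathcal{U}\setminus F}(j)\big)\Big),$$ where $\mathcal{B}=\{i\in\mathbb{Z}:\mathrm{Block}(i)\neq\emptyset\}$.
   Context: $M=(\mathcal{U},\mathcal{I})$ is a matroid; $\mathrm{rank}(X)=\max\{|X'|:X'\subseteq X,X'\in\mathcal{I}\}$, $\mathrm{span}(X)=\{e:\mathrm{rank}(X\cup\{e\})=\mathrm{rank}(X)\}$, $\mathrm{OPT}(X)=\max\{\sum_{e\in X'}\mathrm{val}(e):X'\subseteq X,X'\in\mathcal{I}\}$, $\mathrm{uncov}(R,S)=\mathrm{rank}(R\cup S)-\mathrm{rank}(R)$, $\mathrm{indep}(R,S)=\mathrm{rank}(S\setminus\mathrm{span}(R))$. Standing assumption: elements of rank $0$ have value $0$ and every element of positive value has value $2^i$ for some $i\in\mathbb{Z}$. For $X\subseteq\mathcal{U}$: $B_X(i)=\{e\in X:\mathrm{val}(e)=2^i\}$, $B_X(I)=\bigcup_{i\in I}B_X(i)$. Logarithms base 2. $F\subseteq\mathcal{U}$ is the set of elements revealed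 in a first (observation) stage; afterwards the elements of $\mathcal{U}\setminus F$ are revealed one by one. Critical tuple: $(\mathrm{Block},\mathrm{Gd},\mathrm{Bd})$ where $\mathrm{Block},\mathrm{Gd},\mathrm{Bd}$ are maps from $\mathbb{Z}$ to subsets of $\mathbb{Z}$ such that for all $i\ge j$ with $\mathrm{Block}(i),\mathrm{Block}(j)$ nonempty: (1) $i\in\mathrm{Block}(i)$; (2) if $i>j$ then either $\mathrm{Block}(i)=\mathrm{Block}(j)$ or $\min\mathrm{Block}(i)>\max\mathrm{Block}(j)$; (3) if $\mathrm{Block}(i)=\mathrm{Block}(j)$ then $\mathrm{Gd}(i)=\mathrm{Gd}(j)$ and $\mathrm{Bd}(i)=\mathrm{Bd}(j)$; (4) $\mathrm{Block}(i)\cup\mathrm{Bd}(i)\subseteq\mathrm{Gd}(i)$; (5) if $\min\mathrm{Block}(i)>\max\mathrm{Block}(j)$ then $\mathrm{Bd}(i)\subseteq\mathrm{Gd}(i)\subseteq\mathrm{Bd}(j)\subseteq\mathrm{Gd}(j)$; (6) $\max\mathrm{Block}(i)<\min\mathrm{Bd}(i)$. Gap algorithm with input a critical tuple: start with $P=\emptyset$; immediately after each $e\in\mathcal{U}\setminus F$ is revealed (elements of value $0$ are ignored), let $\ell=\log\mathrm{val}(e)$; if $\mathrm{Block}(\ell)\neq\emptyset$, $e\in\mathrm{span}(B_F(\mathrm{Gd}(\ell)))$ and $e\notin\mathrm{span}(P\cup B_F(\mathrm{Bd}(\ell)))$, then add $e$ to $P$. Output $P$. *)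

theory Defs
  imports Complex_Main
begin

definition matroid :: "'a set \<Rightarrow> 'a set set \<Rightarrow> bool" where
  "matroid U \<I> \<longleftrightarrow> finite U \<and> (\<forall>X\<in>\<I>. X \<subseteq> U) \<and> {} \<in> \<I>
     \<and> (\<forall>X Y. Y \<in> \<I> \<and> X \<subseteq> Y \<longrightarrow> X \<in> \<I>)
     \<and> (\<forall>X\<in>\<I>. \<forall>Y\<in>\<I>. card X < card Y \<longrightarrow> (\<exists>e\<in>Y - X. insert e X \<in> \<I>))"

definition mrank :: "'a set set \<Rightarrow> 'a set \<Rightarrow> nat" where
  "mrank \<I> X = Max {card Y | Y. Y \<subseteq> X \<and> Y \<in> \<I>}"

definition mspan :: "'a set \<Rightarrow> 'a set set \<Rightarrow> 'a set \<Rightarrow> 'a set" where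
  "mspan U \<I> X = {e \<in> U. mrank \<I> (X \<union> {e}) = mrank \<I> X}"

definition OPT :: "'a set set \<Rightarrow> ('a \<Rightarrow> real) \<Rightarrow> 'a set \<Rightarrow> real" where
  "OPT \<I> val X = Max {(\<Sum>e\<in>Y. val e) | Y. Y \<subseteq> X \<and> Y \<in> \<I>}"

definition uncov :: "'a set set \<Rightarrow> 'a set \<Rightarrow> 'a set \<Rightarrow> int" where
  "uncov \<I> R S = int (mrank \<I> (R \<union> S)) - int (mrank \<I> R)"

definition indep_rk :: "'a set \<Rightarrow> 'a set set \<Rightarrow> 'a set \<Rightarrow> 'a set \<Rightarrow> nat" where
  "indep_rk U \<I> R S = mrank \<I> (S - mspan U \<I> R)"

definition bucket :: "('a \<Rightarrow> real) \<Rightarrow> 'a set \<Rightarrow> int \<Rightarrow> 'a set" where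
  "bucket val X i = {e \<in> X. val e = 2 powr (real_of_int i)}"

definition buckets :: "('a \<Rightarrow> real) \<Rightarrow> 'a set \<Rightarrow> int set \<Rightarrow> 'a set" where
  "buckets val X I = (\<Union>i\<in>I. bucket val X i)"

text \<open>"min A > max B" is rendered as: every element of A exceeds every element of B.\<close>
definition critical_tuple :: "(int \<Rightarrow> int set) \<Rightarrow> (int \<Rightarrow> int set) \<Rightarrow> (int \<Rightarrow> int set) \<Rightarrow> bool" where
  "critical_tuple Block Gd Bd \<longleftrightarrow>
    (\<forall>i j. i \<ge> j \<and> Block i \<noteq> {} \<and> Block j \<noteq> {} \<longrightarrow>
       i \<in> Block i
     \<and> (i > j \<longrightarrow> Block i = Block j \<or> (\<forall>a\<in>Block i. \<forall>b\<in>Block j. a > b))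
     \<and> (Block i = Block j \<longrightarrow> Gd i = Gd j \<and> Bd i = Bd j)
     \<and> Block i \<union> Bd i \<subseteq> Gd i
     \<and> ((\<forall>a\<in>Block i. \<forall>b\<in>Block j. a > b) \<longrightarrow> Bd i \<subseteq> Gd i \<and> Gd i \<subseteq> Bd j \<and> Bd j \<subseteq> Gd j)
     \<and> (\<forall>a\<in>Block i. \<forall>b\<in>Bd i. a < b))"

definition gap_step :: "'a set \<Rightarrow> 'a set set \<Rightarrow> ('a \<Rightarrow> real) \<Rightarrow> 'a set
    \<Rightarrow> (int \<Rightarrow> int set) \<Rightarrow> (int \<Rightarrow> int set) \<Rightarrow> (int \<Rightarrow> int set) \<Rightarrow> 'a \<Rightarrow> 'a set \<Rightarrow> 'a set" where
  "gap_step U \<I> val F Block Gd Bd e P =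
     (let l = \<lfloor>log 2 (val e)\<rfloor> in
      if val e \<noteq> 0 \<and> Block l \<noteq> {}
         \<and> e \<in> mspan U \<I> (buckets val F (Gd l))
         \<and> e \<notin> mspan U \<I> (P \<union> buckets val F (Bd l))
      then insert e P else P)"

definition gap_alg :: "'a set \<Rightarrow> 'a set set \<Rightarrow> ('a \<Rightarrow> real) \<Rightarrow> 'a set
    \<Rightarrow> (int \<Rightarrow> int set) \<Rightarrow> (int \<Rightarrow> int set) \<Rightarrow> (int \<Rightarrow> int set) \<Rightarrow> 'a list \<Rightarrow> 'a set" where
  "gap_alg U \<I> val F Block Gd Bd \<sigma> = fold (gap_step U \<I> val F Block Gd Bd) \<sigma> {}"

end

theory Submission
  imports Defs
begin

locale mat =
  fixes U :: "'a set" and I :: "'a set set"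
  assumes M: "matroid U I"
begin

abbreviation r where "r \<equiv> mrank I"
abbreviation sp where "sp \<equiv> mspan U I"

lemma finU: "finite U" using M by (simp add: matroid_def)
lemma indep_sub: "Y \<in> I \<Longrightarrow> Y \<subseteq> U" using M by (simp add: matroid_def)
lemma indep_fin: "Y \<in> I \<Longrightarrow> finite Y" using indep_sub finU finite_subset by blast
lemma empty_indep: "{} \<in> I" using M by (simp add: matroid_def)
lemma indep_down: "Y \<in> I \<Longrightarrow> X \<subseteq> Y \<Longrightarrow> X \<in> I" using M unfolding matroid_def by blast
lemma augment: "X \<in> I \<Longrightarrow> Y \<in> I \<Longrightarrow> card X < card Y \<Longrightarrow> \<exists>e\<in>Y - X. insert e X \<in> I"
  using M unfolding matroid_def by blast

lemma rset_fin: "finite {card Y | Y. Y \<subseteq> X \<and> Y \<in> I}"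
proof -
  have "{card Y | Y. Y \<subseteq> X \<and> Y \<in> I} \<subseteq> {0..card U}"
    using indep_sub finU card_mono by fastforce
  then show ?thesis using finite_subset by blast
qed

lemma rset_ne: "{card Y | Y. Y \<subseteq> X \<and> Y \<in> I} \<noteq> {}"
  using empty_indep by blast

lemma rank_ge: "Y \<subseteq> X \<Longrightarrow> Y \<in> I \<Longrightarrow> card Y \<le> r X"
  unfolding mrank_def using rset_fin by (intro Max_ge) auto

lemma rank_obtain: "\<exists>Y. Y \<subseteq> X \<and> Y \<in> I \<and> card Y = r X"
proof -
  have "r X \<in> {card Y | Y. Y \<subseteq> X \<and> Y \<in> I}"
    unfolding mrank_def using rset_fin rset_ne by (rule Max_in)
  then show ?thesis by auto
qed

lemma rank_mono: "X \<subseteq> Y \<Longrightarrow> r X \<le> r Y"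
proof -
  assume "X \<subseteq> Y"
  moreover obtain Z where "Z \<subseteq> X" "Z \<in> I" "card Z = r X" using rank_obtain by blast
  ultimately show ?thesis using rank_ge[of Z Y] by simp
qed

lemma rank_le_card: "finite X \<Longrightarrow> r X \<le> card X"
proof -
  assume "finite X"
  moreover obtain Z where "Z \<subseteq> X" "Z \<in> I" "card Z = r X" using rank_obtain by blast
  ultimately show ?thesis using card_mono[of X Z] by simp
qed

lemma rank_indep: "Y \<in> I \<Longrightarrow> r Y = card Y"
  using rank_ge[of Y Y] rank_le_card[OF indep_fin] by (simp add: le_antisym)

lemma rank_card_indep: "finite X \<Longrightarrow> r X = card X \<Longrightarrow> X \<in> I"
proof -
  assume "finite X" "r X = card X"
  moreover obtain Z where "Z \<subseteq> X" "Z \<in> I" "card Z = r X" using rank_obtain by blast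
  ultimately show ?thesis using card_subset_eq[of X Z] by simp
qed

lemma extend: "Y \<subseteq> X \<Longrightarrow> Y \<in> I \<Longrightarrow> \<exists>B. Y \<subseteq> B \<and> B \<subseteq> X \<and> B \<in> I \<and> card B = r X"
proof (induction "r X - card Y" arbitrary: Y rule: less_induct)
  case less
  show ?case
  proof (cases "card Y < r X")
    case True
    obtain Z where Z: "Z \<subseteq> X" "Z \<in> I" "card Z = r X" using rank_obtain by blast
    then obtain e where e: "e \<in> Z - Y" "insert e Y \<in> I" using augment[OF less(3) Z(2)] True by auto
    have c: "card (insert e Y) = card Y + 1" using e indep_fin[OF less(3)] by simp
    have sub: "insert e Y \<subseteq> X" using e Z less by auto
    have lt: "r X - card (insert e Y) < r X - card Y" using c True by simp
    obtain B where "insert e Y \<subseteq> B \<and> B \<subseteq> X \<and> B \<in> I \<and> card B = r X"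
      using less(1)[OF lt sub e(2)] by blast
    then show ?thesis by blast
  next
    case False
    then have "card Y = r X" using rank_ge[OF less(2,3)] by simp
    then show ?thesis using less by blast
  qed
qed

lemma submod: "r (S \<union> T) + r (S \<inter> T) \<le> r S + r T"
proof -
  obtain B0 where B0: "B0 \<subseteq> S \<inter> T" "B0 \<in> I" "card B0 = r (S \<inter> T)" using rank_obtain by blast
  obtain B where B: "B0 \<subseteq> B" "B \<subseteq> S \<union> T" "B \<in> I" "card B = r (S \<union> T)"
    using extend[of B0 "S \<union> T"] B0 by blast
  have fB: "finite B" using indep_fin B by simp
  have "card (B \<inter> S) \<le> r S" using rank_ge indep_down[OF B(3)] by auto
  moreover have "card (B \<inter> T) \<le> r T" using rank_ge indep_down[OF B(3)] by auto
  moreover have "card (B \<inter> S) + card (B \<inter> T) = card B + card (B \<inter> S \<inter> T)"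
  proof -
    have "card (B \<inter> S) + card (B \<inter> T) = card ((B \<inter> S) \<union> (B \<inter> T)) + card ((B \<inter> S) \<inter> (B \<inter> T))"
      using fB by (intro card_Un_Int) auto
    moreover have "(B \<inter> S) \<union> (B \<inter> T) = B" using B by auto
    moreover have "(B \<inter> S) \<inter> (B \<inter> T) = B \<inter> S \<inter> T" by auto
    ultimately show ?thesis by simp
  qed
  moreover have "card B0 \<le> card (B \<inter> S \<inter> T)" using B B0 fB by (intro card_mono) auto
  ultimately show ?thesis using B B0 by linarith
qed

lemma subadd: "r (X \<union> Y) \<le> r X + r Y"
  using submod[of X Y] by linarith

lemma subadd_card: "finite Q \<Longrightarrow> r (X \<union> Q) \<le> r X + card Q"
  using subadd[of X Q] rank_le_card[of Q] by linarith

lemma span_mono: "e \<in> sp X \<Longrightarrow> X \<subseteq> Y \<Longrightarrow> e \<in> sp Y"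
proof -
  assume e: "e \<in> sp X" and XY: "X \<subseteq> Y"
  have "r (Y \<union> (X \<union> {e})) + r (Y \<inter> (X \<union> {e})) \<le> r Y + r (X \<union> {e})" by (rule submod)
  moreover have "Y \<union> (X \<union> {e}) = Y \<union> {e}" using XY by auto
  moreover have "r X \<le> r (Y \<inter> (X \<union> {e}))" using XY by (intro rank_mono) auto
  moreover have "r (X \<union> {e}) = r X" using e by (simp add: mspan_def)
  moreover have "r Y \<le> r (Y \<union> {e})" by (intro rank_mono) auto
  ultimately show ?thesis using e by (auto simp: mspan_def)
qed

lemma span_in: "e \<in> U \<Longrightarrow> e \<in> X \<Longrightarrow> e \<in> sp X"
proof -
  assume "e \<in> U" "e \<in> X"
  then have "X \<union> {e} = X" by blast
  then show ?thesis using \<open>e \<in> U\<close> by (simp add: mspan_def)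
qed

lemma closure: "Z \<subseteq> sp X \<Longrightarrow> r (X \<union> Z) = r X"
proof -
  assume Z: "Z \<subseteq> sp X"
  have "sp X \<subseteq> U" unfolding mspan_def by blast
  then have fZ: "finite Z" using Z finU by (meson finite_subset order_trans)
  show ?thesis using fZ Z
  proof (induction Z rule: finite_induct)
    case empty then show ?case by simp
  next
    case (insert z Z)
    have "z \<in> sp X" using insert by blast
    then have "z \<in> sp (X \<union> Z)" by (rule span_mono) blast
    then have "r ((X \<union> Z) \<union> {z}) = r (X \<union> Z)" by (simp add: mspan_def)
    moreover have "X \<union> insert z Z = (X \<union> Z) \<union> {z}" by auto
    moreover have "r (X \<union> Z) = r X" using insert by blast
    ultimately show ?case by simp
  qed
qed

lemma span_closure: "Z \<subseteq> sp X \<Longrightarrow> e \<in> sp (X \<union> Z) \<Longrightarrow> e \<in> sp X"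
proof -
  assume Z: "Z \<subseteq> sp X" and e: "e \<in> sp (X \<union> Z)"
  have Z': "Z \<subseteq> sp (X \<union> {e})"
  proof
    fix z assume "z \<in> Z"
    then have "z \<in> sp X" using Z by blast
    then show "z \<in> sp (X \<union> {e})" by (rule span_mono) blast
  qed
  have "r (X \<union> {e} \<union> Z) = r (X \<union> {e})" using closure[OF Z'] .
  moreover have "X \<union> {e} \<union> Z = (X \<union> Z) \<union> {e}" by auto
  ultimately show ?thesis using e closure[OF Z] by (simp add: mspan_def)
qed

lemma insert_indep: "P \<in> I \<Longrightarrow> e \<in> U \<Longrightarrow> e \<notin> sp P \<Longrightarrow> insert e P \<in> I"
proof -
  assume P: "P \<in> I" and e: "e \<in> U" "e \<notin> sp P"
  have eP: "e \<notin> P" using span_in e by blast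
  have "r (P \<union> {e}) \<noteq> r P" using e by (simp add: mspan_def)
  moreover have "r P \<le> r (P \<union> {e})" by (rule rank_mono) auto
  moreover have "r (P \<union> {e}) \<le> card (P \<union> {e})" using indep_fin[OF P] by (intro rank_le_card) auto
  moreover have "card (P \<union> {e}) = card P + 1" using eP indep_fin[OF P] by simp
  ultimately have "r (P \<union> {e}) = card (P \<union> {e})" using rank_indep[OF P] by linarith
  then show ?thesis using rank_card_indep indep_fin[OF P] by simp
qed

lemma key:
  assumes AX: "r (A \<union> X) = r A" and AXQ: "r (A \<union> X \<union> Q) = r A + card Q"
    and fQ: "finite Q" and eA: "e \<in> sp A" and eXQ: "e \<in> sp (X \<union> Q)"
  shows "e \<in> sp X"
proof -
  have "r ((A \<union> X \<union> {e}) \<union> (X \<union> {e} \<union> Q)) + r ((A \<union> X \<union> {e}) \<inter> (X \<union> {e} \<union> Q))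
        \<le> r (A \<union> X \<union> {e}) + r (X \<union> {e} \<union> Q)" by (rule submod)
  moreover have "r ((A \<union> X \<union> {e}) \<union> (X \<union> {e} \<union> Q)) = r A + card Q"
  proof -
    have "e \<in> sp (A \<union> X \<union> Q)" using eA by (rule span_mono) blast
    then have "r ((A \<union> X \<union> Q) \<union> {e}) = r (A \<union> X \<union> Q)" by (simp add: mspan_def)
    moreover have "(A \<union> X \<union> {e}) \<union> (X \<union> {e} \<union> Q) = (A \<union> X \<union> Q) \<union> {e}" by auto
    ultimately show ?thesis using AXQ by simp
  qed
  moreover have "r (A \<union> X \<union> {e}) = r A"
  proof -
    have "e \<in> sp (A \<union> X)" using eA by (rule span_mono) blast
    then have "r ((A \<union> X) \<union> {e}) = r (A \<union> X)" by (simp add: mspan_def)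
    then show ?thesis using AX by simp
  qed
  moreover have "r (X \<union> {e}) \<le> r ((A \<union> X \<union> {e}) \<inter> (X \<union> {e} \<union> Q))" by (rule rank_mono) auto
  moreover have "r (X \<union> {e} \<union> Q) = r (X \<union> Q)"
  proof -
    have "r ((X \<union> Q) \<union> {e}) = r (X \<union> Q)" using eXQ by (simp add: mspan_def)
    moreover have "X \<union> {e} \<union> Q = (X \<union> Q) \<union> {e}" by auto
    ultimately show ?thesis by simp
  qed
  moreover have "r (X \<union> Q) \<le> r X + card Q" using subadd_card[OF fQ] .
  moreover have "r X \<le> r (X \<union> {e})" by (rule rank_mono) auto
  ultimately have "r (X \<union> {e}) = r X" by linarith
  moreover have "e \<in> U" using eA by (simp add: mspan_def)
  ultimately show ?thesis by (simp add: mspan_def)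
qed

end

locale gap = mat U I for U :: "'a set" and I +
  fixes val :: "'a \<Rightarrow> real" and F :: "'a set" and Block Gd Bd :: "int \<Rightarrow> int set"
  assumes F: "F \<subseteq> U"
    and val_nonneg: "\<forall>e\<in>U. val e \<ge> 0"
    and pow2: "\<forall>e\<in>U. val e > 0 \<longrightarrow> (\<exists>i::int. val e = 2 powr (real_of_int i))"
    and crit: "critical_tuple Block Gd Bd"
begin

abbreviation lv where "lv e \<equiv> \<lfloor>log 2 (val e)\<rfloor>"
abbreviation bk where "bk \<equiv> buckets val"
abbreviation stp where "stp \<equiv> gap_step U I val F Block Gd Bd"

definition add_cond where
  "add_cond e P \<longleftrightarrow> val e \<noteq> 0 \<and> Block (lv e) \<noteq> {} \<and> e \<in> sp (bk F (Gd (lv e)))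
     \<and> e \<notin> sp (P \<union> bk F (Bd (lv e)))"

lemma step_eq: "stp e P = (if add_cond e P then insert e P else P)"
  by (simp add: gap_step_def add_cond_def Let_def)

definition lowb where "lowb j l \<longleftrightarrow> (\<forall>a\<in>Block j. \<forall>b\<in>Block l. b < a)"
definition hib where "hib j l \<longleftrightarrow> (\<forall>a\<in>Block l. \<forall>b\<in>Block j. b < a)"

lemma crit': "i \<ge> j \<Longrightarrow> Block i \<noteq> {} \<Longrightarrow> Block j \<noteq> {} \<Longrightarrow>
       i \<in> Block i
     \<and> (i > j \<longrightarrow> Block i = Block j \<or> (\<forall>a\<in>Block i. \<forall>b\<in>Block j. a > b))
     \<and> (Block i = Block j \<longrightarrow> Gd i = Gd j \<and> Bd i = Bd j)
     \<and> Block i \<union> Bd i \<subseteq> Gd i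
     \<and> ((\<forall>a\<in>Block i. \<forall>b\<in>Block j. a > b) \<longrightarrow> Bd i \<subseteq> Gd i \<and> Gd i \<subseteq> Bd j \<and> Bd j \<subseteq> Gd j)
     \<and> (\<forall>a\<in>Block i. \<forall>b\<in>Bd i. a < b)"
  using crit unfolding critical_tuple_def
  apply -
  apply (erule allE[where x=i])
  apply (erule allE[where x=j])
  apply (erule impE)
   apply (intro conjI; assumption)
  apply assumption
  done

lemma c_in: "Block l \<noteq> {} \<Longrightarrow> l \<in> Block l"
  using crit'[of l l] by (rule conjunct1) simp_all
lemma in_block: "Block l \<noteq> {} \<Longrightarrow> l \<in> Block l" by (rule c_in)

lemma bd_gd: "Block l \<noteq> {} \<Longrightarrow> Bd l \<subseteq> Gd l"
proof -
  assume l: "Block l \<noteq> {}"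
  have h: "Block l \<union> Bd l \<subseteq> Gd l"
    using crit'[of l l, OF order_refl l l, THEN conjunct2, THEN conjunct2, THEN conjunct2, THEN conjunct1] .
  then show ?thesis by blast
qed

lemma c_gt: "j < i \<Longrightarrow> Block i \<noteq> {} \<Longrightarrow> Block j \<noteq> {} \<Longrightarrow>
   Block i = Block j \<or> (\<forall>a\<in>Block i. \<forall>b\<in>Block j. a > b)"
proof -
  assume a: "j < i" "Block i \<noteq> {}" "Block j \<noteq> {}"
  have "j \<le> i" using a by simp
  have "i > j \<longrightarrow> Block i = Block j \<or> (\<forall>a\<in>Block i. \<forall>b\<in>Block j. a > b)"
    using crit'[of j i, OF \<open>j \<le> i\<close> a(2,3), THEN conjunct2, THEN conjunct1] .
  then show ?thesis using a(1) by (rule mp)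
qed

lemma c_same: "j \<le> i \<Longrightarrow> Block i \<noteq> {} \<Longrightarrow> Block j \<noteq> {} \<Longrightarrow> Block i = Block j \<Longrightarrow>
   Gd i = Gd j \<and> Bd i = Bd j"
proof -
  assume a: "j \<le> i" "Block i \<noteq> {}" "Block j \<noteq> {}" "Block i = Block j"
  have "Block i = Block j \<longrightarrow> Gd i = Gd j \<and> Bd i = Bd j"
    using crit'[of j i, OF a(1-3), THEN conjunct2, THEN conjunct2, THEN conjunct1] .
  then show ?thesis using a(4) by (rule mp)
qed

lemma c_sep: "j \<le> i \<Longrightarrow> Block i \<noteq> {} \<Longrightarrow> Block j \<noteq> {} \<Longrightarrow> (\<forall>a\<in>Block i. \<forall>b\<in>Block j. a > b) \<Longrightarrow>
   Gd i \<subseteq> Bd j"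
proof -
  assume a: "j \<le> i" "Block i \<noteq> {}" "Block j \<noteq> {}" "\<forall>a\<in>Block i. \<forall>b\<in>Block j. a > b"
  have "(\<forall>a\<in>Block i. \<forall>b\<in>Block j. a > b) \<longrightarrow> Bd i \<subseteq> Gd i \<and> Gd i \<subseteq> Bd j \<and> Bd j \<subseteq> Gd j"
    using crit'[of j i, OF a(1-3), THEN conjunct2, THEN conjunct2, THEN conjunct2, THEN conjunct2, THEN conjunct1] .
  then have "Bd i \<subseteq> Gd i \<and> Gd i \<subseteq> Bd j \<and> Bd j \<subseteq> Gd j" using a(4) by (rule mp)
  then show ?thesis by (elim conjE)
qed

lemma classify: "Block j \<noteq> {} \<Longrightarrow> Block l \<noteq> {} \<Longrightarrow> Block l = Block j \<or> hib j l \<or> lowb j l"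
proof -
  assume j: "Block j \<noteq> {}" and l: "Block l \<noteq> {}"
  consider "l = j" | "l > j" | "l < j" by linarith
  then show ?thesis
  proof cases
    case 2 then have "Block l = Block j \<or> (\<forall>a\<in>Block l. \<forall>b\<in>Block j. a > b)" by (rule c_gt[OF _ l j])
    then show ?thesis unfolding hib_def by (elim disjE) simp_all
  next
    case 3 then have "Block j = Block l \<or> (\<forall>a\<in>Block j. \<forall>b\<in>Block l. a > b)" by (rule c_gt[OF _ j l])
    then show ?thesis unfolding lowb_def by (elim disjE) simp_all
  next
    case 1 then show ?thesis by simp
  qed
qed

lemma same_gd: "Block j \<noteq> {} \<Longrightarrow> Block l = Block j \<Longrightarrow> Gd l = Gd j \<and> Bd l = Bd j"
proof -
  assume j: "Block j \<noteq> {}" and s: "Block l = Block j"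
  then have l: "Block l \<noteq> {}" by simp
  consider "j \<le> l" | "l \<le> j" by linarith
  then show ?thesis
  proof cases
    case 1 show ?thesis by (rule c_same[OF 1 l j s])
  next
    case 2 have "Gd j = Gd l \<and> Bd j = Bd l" using s by (intro c_same[OF 2 j l]) simp
    then show ?thesis by simp
  qed
qed

lemma hi_gd: "Block j \<noteq> {} \<Longrightarrow> Block l \<noteq> {} \<Longrightarrow> hib j l \<Longrightarrow> Gd l \<subseteq> Bd j"
proof -
  assume j: "Block j \<noteq> {}" and l: "Block l \<noteq> {}" and h: "hib j l"
  have h': "\<forall>a\<in>Block l. \<forall>b\<in>Block j. a > b" using h unfolding hib_def by simp
  have "l > j" using h' in_block[OF j] in_block[OF l] by blast
  then have "j \<le> l" by simp
  show ?thesis by (rule c_sep[OF \<open>j \<le> l\<close> l j h'])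
qed

lemma low_gd: "Block j \<noteq> {} \<Longrightarrow> Block l \<noteq> {} \<Longrightarrow> lowb j l \<Longrightarrow> Gd j \<subseteq> Bd l"
proof -
  assume j: "Block j \<noteq> {}" and l: "Block l \<noteq> {}" and h: "lowb j l"
  have h': "\<forall>a\<in>Block j. \<forall>b\<in>Block l. a > b" using h unfolding lowb_def by simp
  have "j > l" using h' in_block[OF j] in_block[OF l] by blast
  then have "l \<le> j" by simp
  show ?thesis by (rule c_sep[OF \<open>l \<le> j\<close> j l h'])
qed

lemma low_not_same: "Block j \<noteq> {} \<Longrightarrow> lowb j l \<Longrightarrow> Block l \<noteq> Block j"
  using in_block unfolding lowb_def by blast

lemma low_not_hi: "Block j \<noteq> {} \<Longrightarrow> Block l \<noteq> {} \<Longrightarrow> lowb j l \<Longrightarrow> \<not> hib j l"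
  using in_block unfolding lowb_def hib_def by force

lemma bk_mono: "S \<subseteq> T \<Longrightarrow> bk X S \<subseteq> bk X T"
  unfolding buckets_def by blast

lemma bk_U: "bk F S \<subseteq> U"
  using F unfolding buckets_def bucket_def by blast

lemma sub_span: "X \<subseteq> U \<Longrightarrow> X \<subseteq> sp X"
  using span_in by blast

lemma lv_pow: "val e = 2 powr real_of_int i \<Longrightarrow> lv e = i"
  by simp

lemma basic_inv: "P = fold stp xs {} \<Longrightarrow> P \<in> I \<and> P \<subseteq> set xs \<and>
   (\<forall>p\<in>P. val p \<noteq> 0 \<and> Block (lv p) \<noteq> {} \<and> p \<in> U)"
proof (induction xs arbitrary: P rule: rev_induct)
  case Nil then show ?case using empty_indep by simp
next
  case (snoc x xs)
  define P0 where "P0 = fold stp xs {}"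
  have IH: "P0 \<in> I \<and> P0 \<subseteq> set xs \<and> (\<forall>p\<in>P0. val p \<noteq> 0 \<and> Block (lv p) \<noteq> {} \<and> p \<in> U)"
    using snoc.IH P0_def by blast
  have P: "P = stp x P0" using snoc.prems P0_def by simp
  show ?case
  proof (cases "add_cond x P0")
    case True
    then have xU: "x \<in> U" unfolding add_cond_def mspan_def by blast
    have "x \<notin> sp P0"
    proof
      assume "x \<in> sp P0"
      then have "x \<in> sp (P0 \<union> bk F (Bd (lv x)))" by (rule span_mono) blast
      then show False using True unfolding add_cond_def by blast
    qed
    then have "insert x P0 \<in> I" using insert_indep IH xU by blast
    then show ?thesis using P True IH xU step_eq unfolding add_cond_def by auto
  next
    case False
    then show ?thesis using P IH step_eq by auto
  qed
qed


definition Inv where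
  "Inv j xs P \<longleftrightarrow> r (bk F (Gd j) \<union> P) = r (bk F (Gd j)) + card {p\<in>P. lowb j (lv p)}
    \<and> (\<forall>p\<in>P. \<not> lowb j (lv p) \<longrightarrow> p \<in> sp (bk F (Gd j)))
    \<and> (\<forall>p\<in>P. hib j (lv p) \<longrightarrow> p \<in> sp (bk F (Bd j)))
    \<and> (\<forall>e\<in>set xs. e \<in> bucket val (U - F) j \<and> e \<in> sp (bk F (Gd j))
          \<longrightarrow> e \<in> sp (bk F (Bd j) \<union> {p\<in>P. Block (lv p) = Block j}))"

lemma Inv_step:
  assumes j: "Block j \<noteq> {}" and inv: "Inv j xs P" and PI: "P \<in> I"
    and Pb: "\<forall>p\<in>P. Block (lv p) \<noteq> {} \<and> p \<in> U"
  shows "Inv j (xs @ [x]) (stp x P)"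
proof -
  define A where "A = bk F (Gd j)"
  define Bj where "Bj = bk F (Bd j)"
  define S where "S = {p\<in>P. Block (lv p) = Block j}"
  define Q where "Q = {p\<in>P. lowb j (lv p)}"
  have BjA: "Bj \<subseteq> A" unfolding A_def Bj_def using bd_gd[OF j] by (rule bk_mono)
  have AU: "A \<subseteq> U" unfolding A_def by (rule bk_U)
  have fP: "finite P" using indep_fin[OF PI] .
  have i1: "r (A \<union> P) = r A + card Q" and i2: "\<forall>p\<in>P. \<not> lowb j (lv p) \<longrightarrow> p \<in> sp A"
    and i3: "\<forall>p\<in>P. hib j (lv p) \<longrightarrow> p \<in> sp Bj"
    and i4: "\<forall>e\<in>set xs. e \<in> bucket val (U - F) j \<and> e \<in> sp A \<longrightarrow> e \<in> sp (Bj \<union> S)"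
    using inv unfolding Inv_def A_def Bj_def S_def Q_def by blast+
  show ?thesis
  proof (cases "add_cond x P")
    case True
    define l where "l = lv x"
    have P': "stp x P = insert x P" using True step_eq by simp
    have c1: "Block l \<noteq> {}" and c2: "x \<in> sp (bk F (Gd l))" and c3: "x \<notin> sp (P \<union> bk F (Bd l))"
      using True unfolding add_cond_def l_def by blast+
    have xU: "x \<in> U" using c2 unfolding mspan_def by blast
    have xP: "x \<notin> P"
    proof
      assume "x \<in> P"
      then have "x \<in> P \<union> bk F (Bd l)" by blast
      then show False using c3 span_in[OF xU] by blast
    qed
    have S': "S \<subseteq> {p\<in>insert x P. Block (lv p) = Block j}" unfolding S_def by blast
    have iv: "\<forall>e\<in>set (xs @ [x]). e \<in> bucket val (U - F) j \<and> e \<in> sp A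
          \<longrightarrow> e \<in> sp (Bj \<union> {p\<in>insert x P. Block (lv p) = Block j})"
    proof (intro ballI impI)
      fix e assume e: "e \<in> set (xs @ [x])" and eb: "e \<in> bucket val (U - F) j \<and> e \<in> sp A"
      show "e \<in> sp (Bj \<union> {p\<in>insert x P. Block (lv p) = Block j})"
      proof (cases "e \<in> set xs")
        case True
        then have "e \<in> sp (Bj \<union> S)" using i4 eb by blast
        then show ?thesis by (rule span_mono) (use S' in blast)
      next
        case False
        then have ex: "e = x" using e by simp
        have "val x = 2 powr real_of_int j" using eb ex unfolding bucket_def by simp
        then have "lv x = j" by (rule lv_pow)
        then have "x \<in> Bj \<union> {p\<in>insert x P. Block (lv p) = Block j}" by simp
        then show ?thesis using ex span_in[OF xU] by simp
      qed
    qed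
    show ?thesis
    proof (cases "lowb j l")
      case low: True
      have "A \<subseteq> bk F (Bd l)" unfolding A_def by (rule bk_mono[OF low_gd[OF j c1 low]])
      have xnA: "x \<notin> sp (A \<union> P)"
      proof
        assume "x \<in> sp (A \<union> P)"
        then have "x \<in> sp (P \<union> bk F (Bd l))" by (rule span_mono) (use \<open>A \<subseteq> bk F (Bd l)\<close> in blast)
        then show False using c3 by blast
      qed
      have a1: "r ((A \<union> P) \<union> {x}) \<noteq> r (A \<union> P)" using xnA xU unfolding mspan_def by blast
      have a2: "r (A \<union> P) \<le> r ((A \<union> P) \<union> {x})" by (rule rank_mono) blast
      have a3: "r ((A \<union> P) \<union> {x}) \<le> r (A \<union> P) + card {x}" by (rule subadd_card) simp
      have a4: "A \<union> insert x P = (A \<union> P) \<union> {x}" by blast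
      have rr: "r (A \<union> insert x P) = r (A \<union> P) + 1" using a1 a2 a3 a4 by simp
      have Qx: "{p\<in>insert x P. lowb j (lv p)} = insert x Q" unfolding Q_def using low l_def by blast
      have fQ: "finite Q" unfolding Q_def using fP by simp
      have xQ: "x \<notin> Q" unfolding Q_def using xP by blast
      have cQ: "card {p\<in>insert x P. lowb j (lv p)} = card Q + 1" using Qx fQ xQ by simp
      have nh: "\<not> hib j l" by (rule low_not_hi[OF j c1 low])
      have ii: "\<forall>p\<in>insert x P. \<not> lowb j (lv p) \<longrightarrow> p \<in> sp A" using i2 low l_def by blast
      have iii: "\<forall>p\<in>insert x P. hib j (lv p) \<longrightarrow> p \<in> sp Bj" using i3 nh l_def by blast
      show ?thesis unfolding Inv_def P' using rr i1 cQ ii iii iv unfolding A_def Bj_def by simp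
    next
      case nlow: False
      have xA: "x \<in> sp A"
      proof -
        consider "Block l = Block j" | "hib j l" using classify[OF j c1] nlow by blast
        then show ?thesis
        proof cases
          case 1 then have "Gd l = Gd j" using same_gd[OF j] by blast
          then show ?thesis using c2 unfolding A_def by simp
        next
          case 2 then have "Gd l \<subseteq> Gd j" using hi_gd[OF j c1] bd_gd[OF j] by blast
          then have "bk F (Gd l) \<subseteq> A" unfolding A_def by (rule bk_mono)
          then show ?thesis using c2 span_mono by blast
        qed
      qed
      have "x \<in> sp (A \<union> P)" using xA by (rule span_mono) blast
      then have "r ((A \<union> P) \<union> {x}) = r (A \<union> P)" unfolding mspan_def by blast
      moreover have "A \<union> insert x P = (A \<union> P) \<union> {x}" by blast
      ultimately have rr: "r (A \<union> insert x P) = r (A \<union> P)" by simp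
      have Qx: "{p\<in>insert x P. lowb j (lv p)} = Q" unfolding Q_def using nlow l_def by blast
      have ii: "\<forall>p\<in>insert x P. \<not> lowb j (lv p) \<longrightarrow> p \<in> sp A" using i2 xA by blast
      have xB: "hib j l \<longrightarrow> x \<in> sp Bj"
      proof
        assume "hib j l"
        then have "bk F (Gd l) \<subseteq> Bj" unfolding Bj_def by (intro bk_mono hi_gd[OF j c1])
        then show "x \<in> sp Bj" using c2 span_mono by blast
      qed
      have iii: "\<forall>p\<in>insert x P. hib j (lv p) \<longrightarrow> p \<in> sp Bj" using i3 xB l_def by blast
      show ?thesis unfolding Inv_def P' using rr i1 Qx ii iii iv unfolding A_def Bj_def by simp
    qed
  next
    case False
    have P': "stp x P = P" using False step_eq by simp
    have iv: "\<forall>e\<in>set (xs @ [x]). e \<in> bucket val (U - F) j \<and> e \<in> sp A \<longrightarrow> e \<in> sp (Bj \<union> S)"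
    proof (intro ballI impI)
      fix e assume e: "e \<in> set (xs @ [x])" and eb: "e \<in> bucket val (U - F) j \<and> e \<in> sp A"
      show "e \<in> sp (Bj \<union> S)"
      proof (cases "e \<in> set xs")
        case True
        then show ?thesis using i4 eb by blast
      next
        case False
        then have ex: "e = x" using e by simp
        have vx: "val x = 2 powr real_of_int j" using eb ex unfolding bucket_def by simp
        then have lx: "lv x = j" by (rule lv_pow)
        have v0: "val x \<noteq> 0" using vx by simp
        have xA: "x \<in> sp A" using eb ex by simp
        have "x \<in> sp (P \<union> Bj)"
          using \<open>\<not> add_cond x P\<close> v0 j xA lx unfolding add_cond_def A_def Bj_def by simp
        define X where "X = {p\<in>P. \<not> lowb j (lv p)} \<union> Bj"
        have NA: "{p\<in>P. \<not> lowb j (lv p)} \<subseteq> sp A" using i2 by blast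
        have AX: "r (A \<union> X) = r A"
        proof -
          have "A \<union> X = A \<union> {p\<in>P. \<not> lowb j (lv p)}" unfolding X_def using BjA by blast
          then show ?thesis using closure[OF NA] by simp
        qed
        have AXQ: "r (A \<union> X \<union> Q) = r A + card Q"
        proof -
          have "A \<union> X \<union> Q = A \<union> P" unfolding X_def Q_def using BjA by blast
          then show ?thesis using i1 by simp
        qed
        have fQ: "finite Q" unfolding Q_def using fP by simp
        have "X \<union> Q = P \<union> Bj" unfolding X_def Q_def by blast
        then have xXQ: "x \<in> sp (X \<union> Q)" using \<open>x \<in> sp (P \<union> Bj)\<close> by simp
        have xX: "x \<in> sp X" by (rule key[OF AX AXQ fQ xA xXQ])
        define H where "H = {p\<in>P. hib j (lv p)}"
        have XS: "X = (Bj \<union> S) \<union> H"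
        proof -
          have "\<forall>p\<in>P. \<not> lowb j (lv p) \<longrightarrow> Block (lv p) = Block j \<or> hib j (lv p)"
            using classify[OF j] Pb by blast
          moreover have "\<forall>p\<in>P. Block (lv p) = Block j \<longrightarrow> \<not> lowb j (lv p)"
            using low_not_same[OF j] by blast
          moreover have "\<forall>p\<in>P. hib j (lv p) \<longrightarrow> \<not> lowb j (lv p)"
            using low_not_hi[OF j] Pb by blast
          ultimately show ?thesis unfolding X_def S_def H_def by blast
        qed
        have HS: "H \<subseteq> sp (Bj \<union> S)"
        proof
          fix p assume "p \<in> H"
          then have "p \<in> sp Bj" using i3 unfolding H_def by blast
          then show "p \<in> sp (Bj \<union> S)" by (rule span_mono) blast
        qed
        have "x \<in> sp ((Bj \<union> S) \<union> H)" using xX XS by simp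
        then show ?thesis using ex span_closure[OF HS] by simp
      qed
    qed
    show ?thesis unfolding Inv_def P' using i1 i2 i3 iv unfolding A_def Bj_def S_def Q_def by simp
  qed
qed

lemma Inv_all: "Block j \<noteq> {} \<Longrightarrow> Inv j xs (fold stp xs {})"
proof (induction xs rule: rev_induct)
  case Nil then show ?case unfolding Inv_def by simp
next
  case (snoc x xs)
  have b: "fold stp xs {} \<in> I \<and> fold stp xs {} \<subseteq> set xs \<and>
   (\<forall>p\<in>fold stp xs {}. val p \<noteq> 0 \<and> Block (lv p) \<noteq> {} \<and> p \<in> U)" by (rule basic_inv) simp
  have "Inv j (xs @ [x]) (stp x (fold stp xs {}))"
    by (rule Inv_step[OF snoc.prems snoc.IH[OF snoc.prems]]) (use b in blast)+
  then show ?case by simp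
qed


lemma P_val: "p \<in> fold stp xs {} \<Longrightarrow> val p = 2 powr real_of_int (lv p)"
proof -
  assume p: "p \<in> fold stp xs {}"
  have "val p \<noteq> 0 \<and> p \<in> U" using basic_inv[OF refl, of xs] p by blast
  then have "val p > 0" "p \<in> U" using val_nonneg by (auto simp: less_le)
  then obtain i where i: "val p = 2 powr real_of_int i" using pow2 by blast
  then have "lv p = i" by (rule lv_pow)
  then show ?thesis using i by simp
qed

lemma per_j:
  assumes j: "Block j \<noteq> {}" and sig: "set \<sigma> = U - F"
  shows "real_of_int (uncov I (bk F (Bd j) \<union> bk (U - F) (Block j - {j})) (bucket val (U - F) j))
         - real (indep_rk U I (bk F (Gd j)) (bucket val (U - F) j))
       \<le> real (card (fold stp \<sigma> {} \<inter> bucket val (U - F) j))"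
proof -
  define P where "P = fold stp \<sigma> {}"
  define A where "A = bk F (Gd j)"
  define Bj where "Bj = bk F (Bd j)"
  define R where "R = Bj \<union> bk (U - F) (Block j - {j})"
  define Sj where "Sj = bucket val (U - F) j"
  define Pj where "Pj = P \<inter> Sj"
  define T where "T = Sj \<inter> sp A"
  have b: "P \<in> I \<and> P \<subseteq> set \<sigma> \<and> (\<forall>p\<in>P. val p \<noteq> 0 \<and> Block (lv p) \<noteq> {} \<and> p \<in> U)"
    unfolding P_def by (rule basic_inv) simp
  have inv: "Inv j \<sigma> P" unfolding P_def by (rule Inv_all[OF j])
  have i4: "\<forall>e\<in>set \<sigma>. e \<in> Sj \<and> e \<in> sp A \<longrightarrow> e \<in> sp (Bj \<union> {p\<in>P. Block (lv p) = Block j})"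
    using inv unfolding Inv_def A_def Bj_def Sj_def by blast
  have fP: "finite P" using indep_fin b by blast
  have fPj: "finite Pj" unfolding Pj_def using fP by simp
  have sub: "Bj \<union> {p\<in>P. Block (lv p) = Block j} \<subseteq> R \<union> Pj"
  proof
    fix p assume p: "p \<in> Bj \<union> {p\<in>P. Block (lv p) = Block j}"
    show "p \<in> R \<union> Pj"
    proof (cases "p \<in> Bj")
      case True then show ?thesis unfolding R_def by blast
    next
      case False
      then have pP: "p \<in> P" and bl: "Block (lv p) = Block j" using p by blast+
      have pUF: "p \<in> U - F" using pP b sig by blast
      have vp: "val p = 2 powr real_of_int (lv p)" using pP unfolding P_def by (rule P_val)
      have lb: "lv p \<in> Block j" using in_block[of "lv p"] bl j by simp
      show ?thesis
      proof (cases "lv p = j")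
        case True
        then have "p \<in> Sj" unfolding Sj_def bucket_def using pUF vp by simp
        then show ?thesis unfolding Pj_def using pP by blast
      next
        case False
        then have "p \<in> bucket val (U - F) (lv p)" "lv p \<in> Block j - {j}"
          unfolding bucket_def using pUF vp lb by simp_all
        then have "p \<in> bk (U - F) (Block j - {j})" unfolding buckets_def by blast
        then show ?thesis unfolding R_def by blast
      qed
    qed
  qed
  have TS: "T \<subseteq> sp (R \<union> Pj)"
  proof
    fix e assume e: "e \<in> T"
    have "e \<in> set \<sigma>" using e sig unfolding T_def Sj_def bucket_def by blast
    then have "e \<in> sp (Bj \<union> {p\<in>P. Block (lv p) = Block j})" using i4 e unfolding T_def by blast
    then show "e \<in> sp (R \<union> Pj)" by (rule span_mono[OF _ sub])
  qed
  have r1: "r (R \<union> T) \<le> r R + card Pj"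
  proof -
    have "r (R \<union> T) \<le> r ((R \<union> Pj) \<union> T)" by (rule rank_mono) blast
    also have "\<dots> = r (R \<union> Pj)" by (rule closure[OF TS])
    also have "\<dots> \<le> r R + card Pj" by (rule subadd_card[OF fPj])
    finally show ?thesis .
  qed
  have SjU: "Sj \<subseteq> U" unfolding Sj_def bucket_def by blast
  have "R \<union> Sj = (R \<union> T) \<union> (Sj - sp A)" unfolding T_def using SjU by blast
  then have r2: "r (R \<union> Sj) \<le> r (R \<union> T) + r (Sj - sp A)" using subadd by simp
  have "uncov I R Sj = int (r (R \<union> Sj)) - int (r R)" by (simp add: uncov_def)
  moreover have "indep_rk U I A Sj = r (Sj - sp A)" by (simp add: indep_rk_def)
  ultimately have "real_of_int (uncov I R Sj) - real (indep_rk U I A Sj) \<le> real (card Pj)"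
    using r1 r2 by simp
  then show ?thesis unfolding R_def Bj_def Sj_def A_def Pj_def P_def .
qed


lemma main:
  assumes sig: "set \<sigma> = U - F"
  shows "fold stp \<sigma> {} \<in> I \<and> fold stp \<sigma> {} \<subseteq> U - F
    \<and> OPT I val (fold stp \<sigma> {}) \<ge>
       (\<Sum>j\<in>{j. Block j \<noteq> {} \<and> bucket val (U - F) j \<noteq> {}}.
          2 powr (real_of_int j) *
            (real_of_int (uncov I (bk F (Bd j) \<union> bk (U - F) (Block j - {j}))
                                  (bucket val (U - F) j))
             - real (indep_rk U I (bk F (Gd j)) (bucket val (U - F) j))))"
proof -
  define P where "P = fold stp \<sigma> {}"
  define J where "J = {j. Block j \<noteq> {} \<and> bucket val (U - F) j \<noteq> {}}"
  have b: "P \<in> I \<and> P \<subseteq> set \<sigma> \<and> (\<forall>p\<in>P. val p \<noteq> 0 \<and> Block (lv p) \<noteq> {} \<and> p \<in> U)"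
    unfolding P_def by (rule basic_inv) simp
  have PI: "P \<in> I" and PUF: "P \<subseteq> U - F" using b sig by auto
  have fP: "finite P" using indep_fin PI by blast
  have Pv: "\<And>p. p \<in> P \<Longrightarrow> val p = 2 powr real_of_int (lv p)" unfolding P_def by (rule P_val)
  have opt: "OPT I val P = sum val P"
    unfolding OPT_def
  proof (rule Max_eqI)
    have "{\<Sum>e\<in>Y. val e |Y. Y \<subseteq> P \<and> Y \<in> I} \<subseteq> (\<lambda>Y. sum val Y) ` Pow P" by blast
    then show "finite {\<Sum>e\<in>Y. val e |Y. Y \<subseteq> P \<and> Y \<in> I}" using fP finite_subset by blast
  next
    fix y assume "y \<in> {\<Sum>e\<in>Y. val e |Y. Y \<subseteq> P \<and> Y \<in> I}"
    then obtain Y where Y: "Y \<subseteq> P" "y = sum val Y" by blast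
    have "sum val Y \<le> sum val P" using fP Y(1) PUF val_nonneg by (intro sum_mono2) auto
    then show "y \<le> sum val P" using Y by simp
  next
    show "sum val P \<in> {\<Sum>e\<in>Y. val e |Y. Y \<subseteq> P \<and> Y \<in> I}" using PI by blast
  qed
  have JU: "J \<subseteq> lv ` U"
  proof
    fix j assume "j \<in> J"
    then obtain e where "e \<in> bucket val (U - F) j" unfolding J_def by blast
    then have "e \<in> U" "val e = 2 powr real_of_int j" unfolding bucket_def by auto
    then show "j \<in> lv ` U" using lv_pow by force
  qed
  have fJ: "finite J" using finite_subset[OF JU] finU by blast
  have PJ: "lv ` P \<subseteq> J"
  proof
    fix j assume "j \<in> lv ` P"
    then obtain p where p: "p \<in> P" "j = lv p" by blast
    have "p \<in> bucket val (U - F) j" unfolding bucket_def using p PUF Pv[OF p(1)] by auto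
    then show "j \<in> J" unfolding J_def using p b by blast
  qed
  have grp: "sum val P = (\<Sum>j\<in>J. sum val {x \<in> P. lv x = j})"
    using sum.group[OF fP fJ PJ, of val] by simp
  have inner: "\<And>j. sum val {x \<in> P. lv x = j} = 2 powr real_of_int j * real (card (P \<inter> bucket val (U - F) j))"
  proof -
    fix j
    have eq: "{x \<in> P. lv x = j} = P \<inter> bucket val (U - F) j"
    proof
      show "{x \<in> P. lv x = j} \<subseteq> P \<inter> bucket val (U - F) j"
        unfolding bucket_def using PUF Pv by auto
      show "P \<inter> bucket val (U - F) j \<subseteq> {x \<in> P. lv x = j}"
        unfolding bucket_def using lv_pow by auto
    qed
    have "sum val (P \<inter> bucket val (U - F) j) = sum (\<lambda>_. 2 powr real_of_int j) (P \<inter> bucket val (U - F) j)"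
      unfolding bucket_def by (rule sum.cong) auto
    then show "sum val {x \<in> P. lv x = j} = 2 powr real_of_int j * real (card (P \<inter> bucket val (U - F) j))"
      using eq by simp
  qed
  have "(\<Sum>j\<in>J. 2 powr (real_of_int j) *
            (real_of_int (uncov I (bk F (Bd j) \<union> bk (U - F) (Block j - {j})) (bucket val (U - F) j))
             - real (indep_rk U I (bk F (Gd j)) (bucket val (U - F) j))))
        \<le> (\<Sum>j\<in>J. 2 powr real_of_int j * real (card (P \<inter> bucket val (U - F) j)))"
  proof (rule sum_mono)
    fix j assume "j \<in> J"
    then have "Block j \<noteq> {}" unfolding J_def by blast
    from per_j[OF this sig] show "2 powr (real_of_int j) *
            (real_of_int (uncov I (bk F (Bd j) \<union> bk (U - F) (Block j - {j})) (bucket val (U - F) j))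
             - real (indep_rk U I (bk F (Gd j)) (bucket val (U - F) j)))
        \<le> 2 powr real_of_int j * real (card (P \<inter> bucket val (U - F) j))"
      unfolding P_def by (intro mult_left_mono) simp_all
  qed
  also have "\<dots> = OPT I val P" using opt grp inner by simp
  finally show ?thesis using PI PUF unfolding J_def P_def by blast
qed

end

theorem theorem2:
  fixes U :: "'a set" and \<I> :: "'a set set" and val :: "'a \<Rightarrow> real" and F :: "'a set"
    and Block Gd Bd :: "int \<Rightarrow> int set" and \<sigma> :: "'a list"
  assumes M: "matroid U \<I>"
    and F: "F \<subseteq> U"
    and val_nonneg: "\<forall>e\<in>U. val e \<ge> 0"
    and rank0: "\<forall>e\<in>U. mrank \<I> {e} = 0 \<longrightarrow> val e = 0"
    and pow2: "\<forall>e\<in>U. val e > 0 \<longrightarrow> (\<exists>i::int. val e = 2 powr (real_of_int i))"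
    and crit: "critical_tuple Block Gd Bd"
    and order: "distinct \<sigma>" "set \<sigma> = U - F"
  shows "gap_alg U \<I> val F Block Gd Bd \<sigma> \<in> \<I>
    \<and> gap_alg U \<I> val F Block Gd Bd \<sigma> \<subseteq> U - F
    \<and> OPT \<I> val (gap_alg U \<I> val F Block Gd Bd \<sigma>) \<ge>
       (\<Sum>j\<in>{j. Block j \<noteq> {} \<and> bucket val (U - F) j \<noteq> {}}.
          2 powr (real_of_int j) *
            (real_of_int (uncov \<I> (buckets val F (Bd j) \<union> buckets val (U - F) (Block j - {j}))
                                  (bucket val (U - F) j))
             - real (indep_rk U \<I> (buckets val F (Gd j)) (bucket val (U - F) j))))"
  proof -
  interpret g: gap U \<I> val F Block Gd Bd
    using M F val_nonneg pow2 crit by (simp add: gap_def gap_axioms_def mat_def)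
  show ?thesis using g.main[OF order(2)] unfolding gap_alg_def by simp
qed

end
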